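(* Let $\Omega=(0,1)$, let $\Lambda,\beta,\gamma,\mu$ be positive Hölder continuous functions on $[0,1]$, and fix $d_S>0$. Let $\tilde S$ be the unique positive solution of $-d_S\tilde S''=\Lambda-\tilde S$ on $(0,1)$, $\tilde S'(0)=\tilde S'(1)=0$, and assume that the set $\{x\in[0,1]:\beta(x)\tilde S(x)>\gamma(x)+\mu(x)\}$ is nonempty. Then for every sequence $d_{I,n}\to0$ and every sequence $(S_n,I_n)$ of positive solutions of (E) on $\Omega=(0,1)$ with $d_I=d_{I,n}$, there is a subsequence along which $S_n\to S_0$ uniformly on $[0,1]$ for some $S_0\in C([0,1])$ with $S_0>0$ on $[0,1]$, and $\int_0^1 I_n\,dx\to I_0$ for some constant $I_0>0$.
   Context: Problem (E) on $\Omega=(0,1)$ is the steady-state system $$-d_SS''=\Lambda(x)-S-\beta(x)SI+\gamma(x)I,\qquad -d_II''=\beta(x)SI-[\gamma(x)+\mu(x)]I\quad\text{in }(0,1),$$ with $S'(0)=S'(1)=I'(0)=I'(1)=0$; a positive solution means $S>0$, $I>0$ on $[0,1]$. *)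

theory Defs
  imports "HOL-Analysis.Analysis"
begin

definition holder_on01 :: "(real \<Rightarrow> real) \<Rightarrow> bool" where
  "holder_on01 f \<longleftrightarrow> (\<exists>\<alpha> C. 0 < \<alpha> \<and> \<alpha> \<le> 1 \<and>
      (\<forall>x\<in>{0..1}. \<forall>y\<in>{0..1}. \<bar>f x - f y\<bar> \<le> C * \<bar>x - y\<bar> powr \<alpha>))"

definition neumann_C2 :: "(real \<Rightarrow> real) \<Rightarrow> (real \<Rightarrow> real) \<Rightarrow> (real \<Rightarrow> real) \<Rightarrow> bool" where
  "neumann_C2 u u1 u2 \<longleftrightarrow>
     (\<forall>x\<in>{0..1}. (u has_real_derivative u1 x) (at x within {0..1})) \<and>
     continuous_on {0..1} u1 \<and>
     (\<forall>x\<in>{0<..<1}. (u1 has_real_derivative u2 x) (at x)) \<and>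
     u1 0 = 0 \<and> u1 1 = 0"

definition pos_sol_scalar :: "real \<Rightarrow> (real \<Rightarrow> real) \<Rightarrow> (real \<Rightarrow> real) \<Rightarrow> bool" where
  "pos_sol_scalar dS \<Lambda> St \<longleftrightarrow>
     (\<exists>St1 St2. neumann_C2 St St1 St2 \<and>
        (\<forall>x\<in>{0<..<1}. - dS * St2 x = \<Lambda> x - St x)) \<and>
     (\<forall>x\<in>{0..1}. St x > 0)"

definition pos_sol_E :: "real \<Rightarrow> real \<Rightarrow> (real \<Rightarrow> real) \<Rightarrow> (real \<Rightarrow> real) \<Rightarrow> (real \<Rightarrow> real)
    \<Rightarrow> (real \<Rightarrow> real) \<Rightarrow> (real \<Rightarrow> real) \<Rightarrow> (real \<Rightarrow> real) \<Rightarrow> bool" where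
  "pos_sol_E dS dI \<Lambda> \<beta> \<gamma> \<mu> S I \<longleftrightarrow>
     (\<exists>S1 S2 I1 I2. neumann_C2 S S1 S2 \<and> neumann_C2 I I1 I2 \<and>
        (\<forall>x\<in>{0<..<1}.
           - dS * S2 x = \<Lambda> x - S x - \<beta> x * S x * I x + \<gamma> x * I x \<and>
           - dI * I2 x = \<beta> x * S x * I x - (\<gamma> x + \<mu> x) * I x)) \<and>
     (\<forall>x\<in>{0..1}. S x > 0 \<and> I x > 0)"

end

theory Submission
  imports Defs "HOL-Complex_Analysis.Great_Picard"
begin

thm DERIV_continuous_on
lemma mvt_real:
  fixes f :: "real \<Rightarrow> real"
  assumes "a < b" "continuous_on {a..b} f"
    "\<And>x. a < x \<Longrightarrow> x < b \<Longrightarrow> (f has_real_derivative f' x) (at x)"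
  shows "\<exists>z. a < z \<and> z < b \<and> f b - f a = f' z * (b - a)"
proof -
  have "\<And>x. a < x \<Longrightarrow> x < b \<Longrightarrow> f differentiable at x"
    using assms(3) real_differentiable_def by blast
  then obtain l z where "a < z" "z < b" "(f has_real_derivative l) (at z)" "f b - f a = (b - a) * l"
    using MVT[OF assms(1,2)] by blast
  moreover have "l = f' z" using DERIV_unique calculation assms(3) by blast
  ultimately show ?thesis by (auto simp: mult.commute)
qed

lemma within01_at:
  fixes f :: "real \<Rightarrow> real"
  assumes "x \<in> {0<..<1}" "(f has_real_derivative d) (at x within {0..1})"
  shows "(f has_real_derivative d) (at x)"
  using assms at_within_Icc_at[of 0 x 1] by auto

lemma mono_deriv:
  fixes f :: "real \<Rightarrow> real"
  assumes "a \<le> b" "continuous_on {a..b} f"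
    "\<And>x. a < x \<Longrightarrow> x < b \<Longrightarrow> (f has_real_derivative f' x) (at x)"
    "\<And>x. a < x \<Longrightarrow> x < b \<Longrightarrow> f' x \<ge> 0"
  shows "f a \<le> f b"
proof (cases "a = b")
  case False
  then have "a < b" using assms(1) by simp
  from mvt_real[OF this assms(2,3)] obtain z where z: "a < z" "z < b" "f b - f a = f' z * (b - a)" by blast
  moreover have "f' z * (b - a) \<ge> 0" using assms(4)[of z] \<open>a < b\<close> z by simp
  ultimately show ?thesis by linarith
qed simp

lemma lipschitz01:
  fixes f :: "real \<Rightarrow> real"
  assumes "\<forall>x\<in>{0..1}. (f has_real_derivative f1 x) (at x within {0..1})"
    "\<forall>x\<in>{0..1}. \<bar>f1 x\<bar> \<le> B" "x \<in> {0..1}" "y \<in> {0..1}"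
  shows "\<bar>f x - f y\<bar> \<le> B * \<bar>x - y\<bar>"
proof -
  have cont: "continuous_on {0..1} f" using DERIV_continuous_on assms(1) by blast
  have main: "\<bar>f q - f p\<bar> \<le> B * \<bar>q - p\<bar>" if "p < q" "p \<in> {0..1}" "q \<in> {0..1}" for p q
  proof -
    have "continuous_on {p..q} f" using cont continuous_on_subset that by fastforce
    moreover have "(f has_real_derivative f1 x) (at x)" if "p < x" "x < q" for x
      using within01_at[of x f "f1 x"] assms(1) that \<open>p \<in> {0..1}\<close> \<open>q \<in> {0..1}\<close> by auto
    ultimately obtain z where z: "p < z" "z < q" "f q - f p = f1 z * (q - p)"
      using mvt_real[OF \<open>p < q\<close>] by blast
    have "\<bar>f1 z\<bar> \<le> B" using assms(2) z that by auto
    then show ?thesis using z that by (simp add: abs_mult mult_right_mono)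
  qed
  show ?thesis
  proof (cases x y rule: linorder_cases)
    case less then show ?thesis using main[of x y] assms by (simp add: abs_minus_commute)
  next
    case greater then show ?thesis using main[of y x] assms by (simp add: abs_minus_commute)
  qed simp
qed
lemma maxp:
  assumes "neumann_C2 u u1 u2" "\<And>x. x \<in> {0<..<1} \<Longrightarrow> u x > K \<Longrightarrow> u2 x > 0"
  shows "\<forall>x\<in>{0..1}. u x \<le> K"
proof -
  have du: "\<forall>x\<in>{0..1}. (u has_real_derivative u1 x) (at x within {0..1})"
    and cu1: "continuous_on {0..1} u1"
    and du1: "\<forall>x\<in>{0<..<1}. (u1 has_real_derivative u2 x) (at x)"
    and bc: "u1 0 = 0" "u1 1 = 0" using assms(1) unfolding neumann_C2_def by auto
  have cu: "continuous_on {0..1} u" using DERIV_continuous_on du by blast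
  obtain x0 where x0: "x0 \<in> {0..1}" "\<forall>y\<in>{0..1}. u y \<le> u x0"
    using continuous_attains_sup[OF compact_Icc _ cu] by auto
  have "u x0 \<le> K"
  proof (rule ccontr)
    assume "\<not> u x0 \<le> K"
    then have e: "u x0 - K > 0" by simp
    obtain d where d: "d > 0" "\<forall>y\<in>{0..1}. dist y x0 < d \<longrightarrow> dist (u y) (u x0) < u x0 - K"
      using cu x0(1) e unfolding continuous_on_iff by meson
    have uK: "u y > K" if "y \<in> {0..1}" "\<bar>y - x0\<bar> < d" for y
      using d(2) that by (auto simp: dist_real_def)
    have u2pos: "u2 y > 0" if "0 < y" "y < 1" "\<bar>y - x0\<bar> < d" for y
      using assms(2)[of y] uK[of y] that by auto
    have dat: "(u has_real_derivative u1 y) (at y)" if "0 < y" "y < 1" for y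
      using within01_at[of y u "u1 y"] du that by auto
    have dat1: "(u1 has_real_derivative u2 y) (at y)" if "0 < y" "y < 1" for y
      using du1 that by auto
    show False
    proof (cases "x0 < 1 \<and> u1 x0 \<ge> 0")
      case True
      define b where "b = min 1 (x0 + d/2)"
      have b: "x0 < b" "b \<le> 1" using True d(1) by (auto simp: b_def)
      have pos: "u1 y > 0" if "x0 < y" "y \<le> b" for y
      proof -
        have "{x0..y} \<subseteq> {0..1}" using x0(1) that b by auto
        then have "continuous_on {x0..y} u1" using cu1 continuous_on_subset by blast
        moreover have "(u1 has_real_derivative u2 t) (at t)" if "x0 < t" "t < y" for t
          using dat1[of t] x0(1) that \<open>x0 < y\<close> \<open>y \<le> b\<close> b by auto
        ultimately obtain z where z: "x0 < z" "z < y" "u1 y - u1 x0 = u2 z * (y - x0)"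
          using mvt_real[OF \<open>x0 < y\<close>, of u1 u2] by blast
        have "u2 z > 0" using u2pos[of z] z x0(1) that b d(1) by (auto simp: b_def)
        then have "u2 z * (y - x0) > 0" using z by simp
        then show ?thesis using z True by linarith
      qed
      have "{x0..b} \<subseteq> {0..1}" using x0(1) b by auto
      then have "continuous_on {x0..b} u" using cu continuous_on_subset by blast
      moreover have "(u has_real_derivative u1 t) (at t)" if "x0 < t" "t < b" for t
        using dat[of t] x0(1) that b by auto
      ultimately obtain z where z: "x0 < z" "z < b" "u b - u x0 = u1 z * (b - x0)"
        using mvt_real[OF \<open>x0 < b\<close>, of u u1] by blast
      have "u1 z * (b - x0) > 0" using pos[of z] z by simp
      moreover have "u b \<le> u x0" using x0(2) b x0(1) by auto
      ultimately show False using z by linarith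
    next
      case False
      then have F: "x0 > 0" "u1 x0 \<le> 0" using bc x0(1) by (auto simp: less_le)
      define a where "a = max 0 (x0 - d/2)"
      have a: "a < x0" "0 \<le> a" using F d(1) by (auto simp: a_def)
      have neg: "u1 y < 0" if "a \<le> y" "y < x0" for y
      proof -
        have "{y..x0} \<subseteq> {0..1}" using x0(1) that a by auto
        then have "continuous_on {y..x0} u1" using cu1 continuous_on_subset by blast
        moreover have "(u1 has_real_derivative u2 t) (at t)" if "y < t" "t < x0" for t
          using dat1[of t] x0(1) that \<open>y < x0\<close> \<open>a \<le> y\<close> a by auto
        ultimately obtain z where z: "y < z" "z < x0" "u1 x0 - u1 y = u2 z * (x0 - y)"
          using mvt_real[OF \<open>y < x0\<close>, of u1 u2] by blast
        have "u2 z > 0" using u2pos[of z] z x0(1) that a d(1) by (auto simp: a_def)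
        then have "u2 z * (x0 - y) > 0" using z by simp
        then show ?thesis using z F by linarith
      qed
      have "{a..x0} \<subseteq> {0..1}" using x0(1) a by auto
      then have "continuous_on {a..x0} u" using cu continuous_on_subset by blast
      moreover have "(u has_real_derivative u1 t) (at t)" if "a < t" "t < x0" for t
        using dat[of t] x0(1) that a by auto
      ultimately obtain z where z: "a < z" "z < x0" "u x0 - u a = u1 z * (x0 - a)"
        using mvt_real[OF \<open>a < x0\<close>, of u u1] by blast
      have "u1 z * (x0 - a) < 0" using neg[of z] z by (simp add: mult_neg_pos)
      moreover have "u a \<le> u x0" using x0(2) a x0(1) by auto
      ultimately show False using z by linarith
    qed
  qed
  then show ?thesis using x0 by auto
qed

lemma holder_cont:
  assumes "holder_on01 f" shows "continuous_on {0..1} f"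
proof -
  obtain \<alpha> C where a: "0 < \<alpha>" and H: "\<forall>x\<in>{0..1}. \<forall>y\<in>{0..1}. \<bar>f x - f y\<bar> \<le> C * \<bar>x - y\<bar> powr \<alpha>"
    using assms unfolding holder_on01_def by blast
  define C' where "C' = max C 1"
  have C': "C' > 0" "C \<le> C'" by (auto simp: C'_def)
  show ?thesis unfolding continuous_on_iff
  proof (intro ballI allI impI)
    fix x e :: real assume x: "x \<in> {0..1}" and e: "0 < e"
    define d where "d = (e / C') powr (1 / \<alpha>)"
    have d: "d > 0" using e C' by (simp add: d_def)
    have dp: "d powr \<alpha> = e / C'" using e C' a by (simp add: d_def powr_powr)
    show "\<exists>d>0. \<forall>x'\<in>{0..1}. dist x' x < d \<longrightarrow> dist (f x') (f x) < e"
    proof (intro exI conjI ballI impI)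
      show "d > 0" by (rule d)
      fix y assume y: "y \<in> {0..1}" and dy: "dist y x < d"
      have "\<bar>y - x\<bar> powr \<alpha> < d powr \<alpha>"
        using dy a by (intro powr_less_mono2) (auto simp: dist_real_def)
      then have "C' * \<bar>y - x\<bar> powr \<alpha> < C' * (e / C')" using C' dp by (intro mult_strict_left_mono) auto
      also have "C' * (e / C') = e" using C' by simp
      finally have "C' * \<bar>y - x\<bar> powr \<alpha> < e" .
      moreover have "C * \<bar>y - x\<bar> powr \<alpha> \<le> C' * \<bar>y - x\<bar> powr \<alpha>"
        using C' by (intro mult_right_mono) auto
      moreover have "\<bar>f y - f x\<bar> \<le> C * \<bar>y - x\<bar> powr \<alpha>" using H x y by blast
      ultimately show "dist (f y) (f x) < e" by (simp add: dist_real_def)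
    qed
  qed
qed

lemma sturm:
  assumes "neumann_C2 I I1 I2" "\<forall>x\<in>{0..1}. I x > 0" "0 \<le> x1" "x1 < x2" "x2 \<le> 1" "dI > 0"
    "\<forall>x\<in>{x1<..<x2}. dI * I2 x + a x * I x = 0"
    "\<forall>x\<in>{x1<..<x2}. a x > dI * (pi / (x2 - x1))^2"
  shows False
proof -
  have dI: "\<forall>x\<in>{0..1}. (I has_real_derivative I1 x) (at x within {0..1})"
    and cI1: "continuous_on {0..1} I1"
    and dI1: "\<forall>x\<in>{0<..<1}. (I1 has_real_derivative I2 x) (at x)"
    using assms(1) unfolding neumann_C2_def by auto
  have cI: "continuous_on {0..1} I" using DERIV_continuous_on dI by blast
  define w where "w = pi / (x2 - x1)"
  have w: "w > 0" "w * (x2 - x1) = pi" using assms(4) by (auto simp: w_def)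
  define z where "z x = I1 x * sin (w * (x - x1)) - I x * (w * cos (w * (x - x1)))" for x
  define z' where "z' x = sin (w * (x - x1)) * (I2 x + w^2 * I x)" for x
  have sub: "{x1..x2} \<subseteq> {0..1}" using assms(3,5) by auto
  have "continuous_on {x1..x2} z" unfolding z_def
    using continuous_on_subset[OF cI sub] continuous_on_subset[OF cI1 sub]
    by (intro continuous_intros) auto
  moreover have "(z has_real_derivative z' t) (at t)" if "x1 < t" "t < x2" for t
  proof -
    have t01: "t \<in> {0<..<1}" using that assms(3,5) by auto
    have h1: "(I has_real_derivative I1 t) (at t)" using within01_at[OF t01] dI t01 by auto
    have h2: "(I1 has_real_derivative I2 t) (at t)" using dI1 t01 by auto
    show ?thesis unfolding z_def z'_def
      apply (rule derivative_eq_intros h1 h2 refl | simp)+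
      apply (simp add: algebra_simps power2_eq_square)
      done
  qed
  ultimately obtain \<xi> where xi: "x1 < \<xi>" "\<xi> < x2" "z x2 - z x1 = z' \<xi> * (x2 - x1)"
    using mvt_real[OF assms(4), of z z'] by blast
  have z1: "z x1 = - I x1 * w" by (simp add: z_def)
  have z2: "z x2 = I x2 * w" using w by (simp add: z_def)
  have Ipos: "I x1 > 0" "I x2 > 0" "I \<xi> > 0" using assms(2,3,5) xi by auto
  have "z x2 - z x1 > 0" using z1 z2 Ipos w by (simp add: algebra_simps) (smt (verit) mult_pos_pos)
  have sinpos: "sin (w * (\<xi> - x1)) > 0"
  proof (rule sin_gt_zero)
    show "0 < w * (\<xi> - x1)" using w xi by simp
    have "w * (\<xi> - x1) < w * (x2 - x1)" using w xi by (intro mult_strict_left_mono) auto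
    then show "w * (\<xi> - x1) < pi" using w by simp
  qed
  have eq: "dI * I2 \<xi> + a \<xi> * I \<xi> = 0" and ga: "a \<xi> > dI * w^2" using assms(7,8) xi by (auto simp: w_def)
  have "dI * (I2 \<xi> + w^2 * I \<xi>) = (dI * w^2 - a \<xi>) * I \<xi>" using eq by (simp add: algebra_simps)
  also have "\<dots> < 0" using ga Ipos by (simp add: mult_neg_pos)
  finally have "I2 \<xi> + w^2 * I \<xi> < 0" using assms(6) by (simp add: mult_less_0_iff)
  then have "z' \<xi> < 0" using sinpos by (simp add: z'_def mult_pos_neg)
  then have "z' \<xi> * (x2 - x1) < 0" using xi by (simp add: mult_neg_pos)
  with \<open>z x2 - z x1 > 0\<close> xi show False by linarith
qed

lemma neumann_neg:
  assumes "neumann_C2 u u1 u2"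
  shows "neumann_C2 (\<lambda>x. - u x) (\<lambda>x. - u1 x) (\<lambda>x. - u2 x)"
proof -
  have a: "\<forall>x\<in>{0..1}. (u has_real_derivative u1 x) (at x within {0..1})"
    "continuous_on {0..1} u1" "\<forall>x\<in>{0<..<1}. (u1 has_real_derivative u2 x) (at x)"
    "u1 0 = 0" "u1 1 = 0" using assms unfolding neumann_C2_def by auto
  show ?thesis unfolding neumann_C2_def
    using a continuous_on_minus[OF a(2)] by (auto intro!: DERIV_minus)
qed

lemma neumann_diff:
  assumes "neumann_C2 u u1 u2" "neumann_C2 v v1 v2"
  shows "neumann_C2 (\<lambda>x. u x - v x) (\<lambda>x. u1 x - v1 x) (\<lambda>x. u2 x - v2 x)"
proof -
  have a: "\<forall>x\<in>{0..1}. (u has_real_derivative u1 x) (at x within {0..1})"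
    "continuous_on {0..1} u1" "\<forall>x\<in>{0<..<1}. (u1 has_real_derivative u2 x) (at x)"
    "u1 0 = 0" "u1 1 = 0" using assms(1) unfolding neumann_C2_def by auto
  have b: "\<forall>x\<in>{0..1}. (v has_real_derivative v1 x) (at x within {0..1})"
    "continuous_on {0..1} v1" "\<forall>x\<in>{0<..<1}. (v1 has_real_derivative v2 x) (at x)"
    "v1 0 = 0" "v1 1 = 0" using assms(2) unfolding neumann_C2_def by auto
  show ?thesis unfolding neumann_C2_def
    using a b continuous_on_diff[OF a(2) b(2)] by (auto intro!: DERIV_diff)
qed

lemma minp:
  assumes "neumann_C2 u u1 u2" "\<And>x. x \<in> {0<..<1} \<Longrightarrow> u x < k \<Longrightarrow> u2 x < 0"
  shows "\<forall>x\<in>{0..1}. k \<le> u x"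
proof -
  have "\<forall>x\<in>{0..1}. - u x \<le> - k"
    by (rule maxp[OF neumann_neg[OF assms(1)]]) (use assms(2) in force)
  then show ?thesis by auto
qed

lemma neumann_cont:
  assumes "neumann_C2 u u1 u2"
  shows "continuous_on {0..1} u" "continuous_on {0..1} u1"
    "\<And>x. x \<in> {0<..<1} \<Longrightarrow> (u has_real_derivative u1 x) (at x)"
    "\<And>x. x \<in> {0<..<1} \<Longrightarrow> (u1 has_real_derivative u2 x) (at x)"
    "u1 0 = 0" "u1 1 = 0"
    "\<forall>x\<in>{0..1}. (u has_real_derivative u1 x) (at x within {0..1})"
proof -
  have a: "\<forall>x\<in>{0..1}. (u has_real_derivative u1 x) (at x within {0..1})"
    "continuous_on {0..1} u1" "\<forall>x\<in>{0<..<1}. (u1 has_real_derivative u2 x) (at x)"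
    "u1 0 = 0" "u1 1 = 0" using assms unfolding neumann_C2_def by auto
  show "continuous_on {0..1} u" using DERIV_continuous_on a(1) by blast
  show "continuous_on {0..1} u1" "u1 0 = 0" "u1 1 = 0"
    "\<forall>x\<in>{0..1}. (u has_real_derivative u1 x) (at x within {0..1})" using a by auto
  show "(u1 has_real_derivative u2 x) (at x)" if "x \<in> {0<..<1}" for x using a(3) that by auto
  show "(u has_real_derivative u1 x) (at x)" if "x \<in> {0<..<1}" for x
    using within01_at[OF that] a(1) that by auto
qed

lemma int_deriv:
  fixes f :: "real \<Rightarrow> real"
  assumes "continuous_on {0..1} f" "x \<in> {0<..<1}"
  shows "((\<lambda>t. integral {0..t} f) has_real_derivative f x) (at x)"
  using within01_at[OF assms(2)] integral_has_real_derivative[OF assms(1), of x] assms(2) by auto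

lemma int_cont:
  fixes f :: "real \<Rightarrow> real"
  assumes "continuous_on {0..1} f"
  shows "continuous_on {0..1} (\<lambda>t. integral {0..t} f)"
  using integral_has_real_derivative[OF assms] DERIV_continuous_on by blast

lemma int_mono:
  fixes f :: "real \<Rightarrow> real"
  assumes "continuous_on {0..1} f" "\<forall>x\<in>{0..1}. f x \<ge> 0" "0 \<le> s" "s \<le> t" "t \<le> 1"
  shows "integral {0..s} f \<le> integral {0..t} f" "0 \<le> integral {0..s} f"
proof -
  have c: "continuous_on {s..t} (\<lambda>t. integral {0..t} f)"
  proof -
    have "{s..t} \<subseteq> {0..1::real}" using assms(3-5) by auto
    then show ?thesis using int_cont[OF assms(1)] continuous_on_subset by blast
  qed
  show "integral {0..s} f \<le> integral {0..t} f"
  proof (rule mono_deriv[OF assms(4) c, where f'=f])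
    fix x assume "s < x" "x < t"
    then have x: "x \<in> {0<..<1}" using assms by auto
    show "((\<lambda>t. integral {0..t} f) has_real_derivative f x) (at x)" using int_deriv[OF assms(1) x] .
    show "0 \<le> f x" using assms(2) x by auto
  qed
  have c0: "continuous_on {0..s} (\<lambda>t. integral {0..t} f)"
  proof -
    have "{0..s} \<subseteq> {0..1::real}" using assms(3-5) by auto
    then show ?thesis using int_cont[OF assms(1)] continuous_on_subset by blast
  qed
  have "integral {0..0} f \<le> integral {0..s} f"
  proof (rule mono_deriv[OF assms(3) c0, where f'=f])
    fix x assume "0 < x" "x < s"
    then have x: "x \<in> {0<..<1}" using assms by auto
    show "((\<lambda>t. integral {0..t} f) has_real_derivative f x) (at x)" using int_deriv[OF assms(1) x] .
    show "0 \<le> f x" using assms(2) x by auto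
  qed
  then show "0 \<le> integral {0..s} f" by simp
qed

lemma sol_parts:
  assumes "pos_sol_E dS dI \<Lambda> \<beta> \<gamma> \<mu> S I"
  obtains S1 S2 I1 I2 where "neumann_C2 S S1 S2" "neumann_C2 I I1 I2"
    "\<And>x. x \<in> {0<..<1} \<Longrightarrow> - dS * S2 x = \<Lambda> x - S x - \<beta> x * S x * I x + \<gamma> x * I x"
    "\<And>x. x \<in> {0<..<1} \<Longrightarrow> - dI * I2 x = \<beta> x * S x * I x - (\<gamma> x + \<mu> x) * I x"
    "\<And>x. x \<in> {0..1} \<Longrightarrow> S x > 0" "\<And>x. x \<in> {0..1} \<Longrightarrow> I x > 0"
  using assms unfolding pos_sol_E_def by blast

locale sirs =
  fixes \<Lambda> \<beta> \<gamma> \<mu> :: "real \<Rightarrow> real" and dS BL Bb Bg mmu klow Kup :: real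
  assumes cL: "continuous_on {0..1} \<Lambda>" and cb: "continuous_on {0..1} \<beta>"
    and cg: "continuous_on {0..1} \<gamma>" and cm: "continuous_on {0..1} \<mu>"
    and pos: "\<And>x. x \<in> {0..1} \<Longrightarrow> \<Lambda> x > 0 \<and> \<beta> x > 0 \<and> \<gamma> x > 0 \<and> \<mu> x > 0"
    and dS: "dS > 0"
    and bnd: "\<And>x. x \<in> {0..1} \<Longrightarrow> \<Lambda> x \<le> BL \<and> \<beta> x \<le> Bb \<and> \<gamma> x \<le> Bg \<and> mmu \<le> \<mu> x \<and>
         klow \<le> \<Lambda> x \<and> klow * \<beta> x \<le> \<gamma> x \<and> \<Lambda> x \<le> Kup \<and> \<gamma> x \<le> Kup * \<beta> x"
    and mmu: "mmu > 0" and klow: "klow > 0"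
begin

lemma consts_pos: "BL > 0" "Bb > 0" "Bg > 0" "Kup > 0"
proof -
  have z: "(0::real) \<in> {0..1}" by simp
  show "BL > 0" "Bb > 0" "Bg > 0" "Kup > 0" using bnd[OF z] pos[OF z] by linarith+
qed

lemma S_bounds:
  assumes "pos_sol_E dS dI \<Lambda> \<beta> \<gamma> \<mu> S I"
  shows "\<forall>x\<in>{0..1}. klow \<le> S x \<and> S x \<le> Kup"
proof -
  obtain S1 S2 I1 I2 where nS: "neumann_C2 S S1 S2" and nI: "neumann_C2 I I1 I2"
    and eqS: "\<And>x. x \<in> {0<..<1} \<Longrightarrow> - dS * S2 x = \<Lambda> x - S x - \<beta> x * S x * I x + \<gamma> x * I x"
    and Sp: "\<And>x. x \<in> {0..1} \<Longrightarrow> S x > 0" and Ip: "\<And>x. x \<in> {0..1} \<Longrightarrow> I x > 0"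
    using sol_parts[OF assms] by metis
  have up: "\<forall>x\<in>{0..1}. S x \<le> Kup"
  proof (rule maxp[OF nS])
    fix x assume x: "x \<in> {0<..<1}" and Sx: "S x > Kup"
    have x01: "x \<in> {0..1}" using x by auto
    note b = bnd[OF x01] and p = pos[OF x01]
    have "Kup * \<beta> x < S x * \<beta> x" using Sx p by (intro mult_strict_right_mono) auto
    then have "\<gamma> x - \<beta> x * S x < 0" using b by (simp add: mult.commute)
    then have "(\<gamma> x - \<beta> x * S x) * I x < 0" using Ip[OF x01] by (simp add: mult_neg_pos)
    then have "- dS * S2 x < 0" using eqS[OF x] b Sx by (simp add: algebra_simps)
    then show "S2 x > 0" using dS by (auto simp: mult_less_0_iff zero_less_mult_iff)
  qed
  have low: "\<forall>x\<in>{0..1}. klow \<le> S x"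
  proof (rule minp[OF nS])
    fix x assume x: "x \<in> {0<..<1}" and Sx: "S x < klow"
    have x01: "x \<in> {0..1}" using x by auto
    note b = bnd[OF x01] and p = pos[OF x01]
    have "S x * \<beta> x < klow * \<beta> x" using Sx p by (intro mult_strict_right_mono) auto
    then have "\<gamma> x - \<beta> x * S x > 0" using b by (simp add: mult.commute)
    then have "(\<gamma> x - \<beta> x * S x) * I x > 0" using Ip[OF x01] by simp
    then have "- dS * S2 x > 0" using eqS[OF x] b Sx by (simp add: algebra_simps)
    then show "S2 x < 0" using dS by (auto simp: mult_less_0_iff zero_less_mult_iff)
  qed
  show ?thesis using up low by auto
qed

end

context sirs begin

lemma int_bound:
  assumes "pos_sol_E dS dI \<Lambda> \<beta> \<gamma> \<mu> S I" "dI > 0"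
  shows "integral {0..1} I \<le> BL / mmu" "0 \<le> integral {0..1} I" "continuous_on {0..1} I"
    "\<forall>x\<in>{0..1}. I x > 0"
proof -
  obtain S1 S2 I1 I2 where nS: "neumann_C2 S S1 S2" and nI: "neumann_C2 I I1 I2"
    and eqS: "\<And>x. x \<in> {0<..<1} \<Longrightarrow> - dS * S2 x = \<Lambda> x - S x - \<beta> x * S x * I x + \<gamma> x * I x"
    and eqI: "\<And>x. x \<in> {0<..<1} \<Longrightarrow> - dI * I2 x = \<beta> x * S x * I x - (\<gamma> x + \<mu> x) * I x"
    and Sp: "\<And>x. x \<in> {0..1} \<Longrightarrow> S x > 0" and Ip: "\<And>x. x \<in> {0..1} \<Longrightarrow> I x > 0"
    using sol_parts[OF assms(1)] by metis
  note cS = neumann_cont[OF nS] and cI = neumann_cont[OF nI]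
  show "continuous_on {0..1} I" "\<forall>x\<in>{0..1}. I x > 0" using cI Ip by auto
  define F where "F x = \<Lambda> x - S x - \<mu> x * I x" for x
  have cF: "continuous_on {0..1} F" unfolding F_def
    by (intro continuous_on_diff continuous_on_mult cL cS(1) cm cI(1))
  define Y where "Y t = dS * S1 t + dI * I1 t + integral {0..t} F" for t
  have cY: "continuous_on {0..1} Y" unfolding Y_def
    by (intro continuous_on_add continuous_on_mult continuous_on_const cS(2) cI(2) int_cont cF)
  have dY: "(Y has_real_derivative 0) (at x)" if "0 < x" "x < 1" for x
  proof -
    have x: "x \<in> {0<..<1}" using that by auto
    have "(Y has_real_derivative dS * S2 x + dI * I2 x + F x) (at x)" unfolding Y_def
      by (intro DERIV_add DERIV_cmult cS(4)[OF x] cI(4)[OF x] int_deriv[OF cF x])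
    moreover have "dS * S2 x + dI * I2 x + F x = 0"
      using eqS[OF x] eqI[OF x] by (simp add: F_def algebra_simps)
    ultimately show ?thesis by simp
  qed
  have "Y 0 \<le> Y 1" by (rule mono_deriv[OF _ cY dY]) auto
  moreover have "- Y 0 \<le> - Y 1"
    by (rule mono_deriv[OF _ continuous_on_minus[OF cY], where f'="\<lambda>x. 0"]) (use DERIV_minus[OF dY] in auto)
  ultimately have "Y 1 = Y 0" by linarith
  then have F0: "integral {0..1} F = 0" using cS(5,6) cI(5,6) by (simp add: Y_def)
  have iL: "\<Lambda> integrable_on {0..1}" using cL by (rule integrable_continuous_interval)
  have iS: "S integrable_on {0..1}" using cS(1) by (rule integrable_continuous_interval)
  have cmI: "continuous_on {0..1} (\<lambda>x. \<mu> x * I x)" by (intro continuous_on_mult cm cI(1))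
  have imI: "(\<lambda>x. \<mu> x * I x) integrable_on {0..1}" using cmI by (rule integrable_continuous_interval)
  have iI: "I integrable_on {0..1}" using cI(1) by (rule integrable_continuous_interval)
  have "integral {0..1} F = integral {0..1} \<Lambda> - integral {0..1} S - integral {0..1} (\<lambda>x. \<mu> x * I x)"
    unfolding F_def using iL iS imI by (simp add: integral_diff Henstock_Kurzweil_Integration.integrable_diff)
  then have eqint: "integral {0..1} (\<lambda>x. \<mu> x * I x) = integral {0..1} \<Lambda> - integral {0..1} S"
    using F0 by linarith
  have "integral {0..1} \<Lambda> \<le> integral {0..1} (\<lambda>x::real. BL)"
  proof (rule integral_le)
    show "\<Lambda> integrable_on {0..1}" by (rule iL)
    show "(\<lambda>x::real. BL) integrable_on {0..1}" by (intro integrable_continuous_interval continuous_on_const)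
    fix x :: real assume "x \<in> {0..1}" then show "\<Lambda> x \<le> BL" using bnd by auto
  qed
  then have L1: "integral {0..1} \<Lambda> \<le> BL" by simp
  have S0: "0 \<le> integral {0..1} S" by (rule integral_nonneg[OF iS]) (use Sp in \<open>auto intro: less_imp_le\<close>)
  have "integral {0..1} (\<lambda>x. mmu * I x) \<le> integral {0..1} (\<lambda>x. \<mu> x * I x)"
  proof (rule integral_le)
    show "(\<lambda>x. mmu * I x) integrable_on {0..1}"
      by (intro integrable_continuous_interval continuous_on_mult continuous_on_const cI(1))
    show "(\<lambda>x. \<mu> x * I x) integrable_on {0..1}" by (rule imI)
    fix x :: real assume x: "x \<in> {0..1}"
    show "mmu * I x \<le> \<mu> x * I x" using bnd[OF x] Ip[OF x] by (intro mult_right_mono) auto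
  qed
  then have "mmu * integral {0..1} I \<le> BL" using eqint L1 S0 by simp
  then show "integral {0..1} I \<le> BL / mmu" using mmu by (simp add: pos_le_divide_eq mult.commute)
  show "0 \<le> integral {0..1} I" by (rule integral_nonneg[OF iI]) (use Ip in \<open>auto intro: less_imp_le\<close>)
qed

definition Dn where "Dn = (BL + Kup + (Bb * Kup + Bg) * (BL / mmu)) / dS"

lemma S_lip:
  assumes "pos_sol_E dS dI \<Lambda> \<beta> \<gamma> \<mu> S I" "dI > 0"
  shows "\<forall>x\<in>{0..1}. \<forall>y\<in>{0..1}. \<bar>S x - S y\<bar> \<le> Dn * \<bar>x - y\<bar>"
proof -
  obtain S1 S2 I1 I2 where nS: "neumann_C2 S S1 S2" and nI: "neumann_C2 I I1 I2"
    and eqS: "\<And>x. x \<in> {0<..<1} \<Longrightarrow> - dS * S2 x = \<Lambda> x - S x - \<beta> x * S x * I x + \<gamma> x * I x"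
    and Sp: "\<And>x. x \<in> {0..1} \<Longrightarrow> S x > 0" and Ip: "\<And>x. x \<in> {0..1} \<Longrightarrow> I x > 0"
    using sol_parts[OF assms(1)] by metis
  note cS = neumann_cont[OF nS] and cI = neumann_cont[OF nI]
  note Sb = S_bounds[OF assms(1)] and ib = int_bound[OF assms]
  note cp = consts_pos
  define A where "A = BL + Kup"
  define B where "B = Bb * Kup + Bg"
  define P where "P t = integral {0..t} I" for t
  have AB: "A \<ge> 0" "B \<ge> 0" using cp by (auto simp: A_def B_def)
  have Dn_eq: "Dn = (A + B * (BL / mmu)) / dS" by (simp add: Dn_def A_def B_def)
  have S2b: "\<bar>dS * S2 x\<bar> \<le> A + B * I x" if x: "x \<in> {0<..<1}" for x
  proof -
    have x01: "x \<in> {0..1}" using x by auto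
    note b = bnd[OF x01] and p = pos[OF x01]
    have s: "0 < S x" "S x \<le> Kup" using Sb x01 Sp by auto
    have i: "0 < I x" using Ip x01 by auto
    have "\<beta> x * S x \<le> Bb * Kup" using b p s by (intro mult_mono) auto
    then have t1: "\<beta> x * S x * I x \<le> Bb * Kup * I x" using i by (intro mult_right_mono) auto
    have t2: "\<gamma> x * I x \<le> Bg * I x" using b i by (intro mult_right_mono) auto
    have t3: "0 \<le> \<beta> x * S x * I x" "0 \<le> \<gamma> x * I x" using p s i by auto
    have "\<bar>dS * S2 x\<bar> = \<bar>\<Lambda> x - S x - \<beta> x * S x * I x + \<gamma> x * I x\<bar>"
      using eqS[OF x] by (metis abs_minus_cancel minus_mult_left)
    also have "\<dots> \<le> A + B * I x" using t1 t2 t3 b p s unfolding A_def B_def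
      by (simp add: algebra_simps abs_le_iff)
    finally show ?thesis .
  qed
  have cP: "continuous_on {0..1} P" unfolding P_def by (rule int_cont[OF cI(1)])
  have dP: "(P has_real_derivative I x) (at x)" if "x \<in> {0<..<1}" for x
    unfolding P_def using int_deriv[OF cI(1) that] .
  have bound: "\<bar>S1 x\<bar> \<le> Dn" if x: "x \<in> {0..1}" for x
  proof (cases "x = 0")
    case True
    have "Dn \<ge> 0" using AB dS mmu cp by (simp add: Dn_eq)
    then show ?thesis using True cS(5) by simp
  next
    case False
    then have x0: "0 < x" "x \<le> 1" using x by auto
    have sub: "{0..x} \<subseteq> {0..1}" using x0 by auto
    have cS1: "continuous_on {0..x} S1" using continuous_on_subset[OF cS(2) sub] .
    have cPx: "continuous_on {0..x} P" using continuous_on_subset[OF cP sub] .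
    define Yp where "Yp t = S1 t + (A * t + B * P t) / dS" for t
    define Ym where "Ym t = - S1 t + (A * t + B * P t) / dS" for t
    have cYp: "continuous_on {0..x} Yp" unfolding Yp_def
      by (intro continuous_on_add continuous_on_divide continuous_on_mult continuous_on_const continuous_on_id cS1 cPx) (use dS in auto)
    have cYm: "continuous_on {0..x} Ym" unfolding Ym_def
      by (intro continuous_on_add continuous_on_minus continuous_on_divide continuous_on_mult continuous_on_const continuous_on_id cS1 cPx) (use dS in auto)
    have "Yp 0 \<le> Yp x"
    proof (rule mono_deriv[OF _ cYp, where f'="\<lambda>t. S2 t + (A + B * I t) / dS"])
      fix t assume t: "0 < t" "t < x"
      then have t01: "t \<in> {0<..<1}" using x0 by auto
      show "(Yp has_real_derivative S2 t + (A + B * I t) / dS) (at t)" unfolding Yp_def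
        by (rule derivative_eq_intros cS(4)[OF t01] dP[OF t01] refl | use dS in \<open>simp add: field_simps\<close>)+
      have "- (A + B * I t) \<le> dS * S2 t" using S2b[OF t01] by (simp add: abs_le_iff)
      moreover have "S2 t + (A + B * I t) / dS = (dS * S2 t + (A + B * I t)) / dS" using dS by (simp add: field_simps)
      ultimately show "0 \<le> S2 t + (A + B * I t) / dS" using dS by simp
    qed (use x0 in auto)
    moreover have "Ym 0 \<le> Ym x"
    proof (rule mono_deriv[OF _ cYm, where f'="\<lambda>t. - S2 t + (A + B * I t) / dS"])
      fix t assume t: "0 < t" "t < x"
      then have t01: "t \<in> {0<..<1}" using x0 by auto
      show "(Ym has_real_derivative - S2 t + (A + B * I t) / dS) (at t)" unfolding Ym_def
        by (rule derivative_eq_intros cS(4)[OF t01] dP[OF t01] refl | use dS in \<open>simp add: field_simps\<close>)+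
      have "dS * S2 t \<le> A + B * I t" using S2b[OF t01] by (simp add: abs_le_iff)
      then have "S2 t \<le> (A + B * I t) / dS" using dS by (simp add: le_divide_eq mult.commute)
      then show "0 \<le> - S2 t + (A + B * I t) / dS" by simp
    qed (use x0 in auto)
    moreover have "P 0 = 0" by (simp add: P_def)
    moreover have "P x \<le> BL / mmu"
      using int_mono(1)[OF cI(1), of x 1] ib(1) Ip x0 unfolding P_def by (force intro: less_imp_le)
    moreover have "P x \<ge> 0" using int_mono(2)[OF cI(1), of x x] Ip x0 unfolding P_def by (force intro: less_imp_le)
    ultimately have "\<bar>S1 x\<bar> \<le> (A * x + B * P x) / dS" using cS(5) unfolding Yp_def Ym_def by auto
    also have "\<dots> \<le> (A + B * (BL / mmu)) / dS"
    proof -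
      have "A * x \<le> A" using AB x0 by (simp add: mult_left_le)
      moreover have "B * P x \<le> B * (BL / mmu)" using AB \<open>P x \<le> BL / mmu\<close> by (intro mult_left_mono) auto
      ultimately show ?thesis using dS by (simp add: divide_right_mono)
    qed
    finally show ?thesis by (simp add: Dn_eq)
  qed
  show ?thesis using lipschitz01[OF cS(7)] bound by blast
qed

end

lemma dchi1:
  fixes v1 P :: "real \<Rightarrow> real"
  assumes "(v1 has_real_derivative d1) (at s)" "(P has_real_derivative d2) (at s)"
  shows "((\<lambda>s. v1 s - ((s - x0) * m - C1 * (P s - P x0)) / dS) has_real_derivative d1 - (m - C1 * d2) / dS) (at s)"
proof -
  have "((\<lambda>s. (s - x0) * m - C1 * (P s - P x0)) has_real_derivative (m - C1 * d2)) (at s)"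
    by (rule derivative_eq_intros assms(2) refl | simp)+
  from DERIV_diff[OF assms(1) DERIV_cdivide[OF this, of dS]] show ?thesis by simp
qed

lemma dchi2:
  fixes v1 P :: "real \<Rightarrow> real"
  assumes "(v1 has_real_derivative d1) (at s)" "(P has_real_derivative d2) (at s)"
  shows "((\<lambda>s. v1 s + ((x0 - s) * m - C1 * (P x0 - P s)) / dS) has_real_derivative d1 - (m - C1 * d2) / dS) (at s)"
proof -
  have "((\<lambda>s. (x0 - s) * m - C1 * (P x0 - P s)) has_real_derivative (- (m - C1 * d2))) (at s)"
    by (rule derivative_eq_intros assms(2) refl | simp add: algebra_simps)+
  from DERIV_add[OF assms(1) DERIV_cdivide[OF this, of dS]] show ?thesis
    by (rule DERIV_cong) (simp add: diff_divide_distrib)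
qed

lemma dpsi1:
  fixes v :: "real \<Rightarrow> real"
  assumes "(v has_real_derivative d1) (at s)"
  shows "((\<lambda>s. v s - ((s - x0)^2 * m / 2 - (s - x0) * K) / dS) has_real_derivative d1 - ((s - x0) * m - K) / dS) (at s)"
proof -
  have "((\<lambda>s. (s - x0)^2 * m / 2 - (s - x0) * K) has_real_derivative ((s - x0) * m - K)) (at s)"
    by (rule derivative_eq_intros refl | simp add: field_simps)+
  from DERIV_diff[OF assms(1) DERIV_cdivide[OF this, of dS]] show ?thesis by simp
qed

lemma dpsi2:
  fixes v :: "real \<Rightarrow> real"
  assumes "(v has_real_derivative d1) (at s)"
  shows "((\<lambda>s. - v s + ((x0 - s)^2 * m / 2 - (x0 - s) * K) / dS) has_real_derivative - d1 + (K - (x0 - s) * m) / dS) (at s)"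
proof -
  have "((\<lambda>s. (x0 - s)^2 * m / 2 - (x0 - s) * K) has_real_derivative (K - (x0 - s) * m)) (at s)"
    by (rule derivative_eq_intros refl | simp add: field_simps)+
  from DERIV_add[OF DERIV_minus[OF assms(1)] DERIV_cdivide[OF this, of dS]] show ?thesis by simp
qed

lemma closeness_core:
  fixes v v1 v2 g I :: "real \<Rightarrow> real"
  assumes nv: "neumann_C2 v v1 v2" and dS: "dS > 0"
    and eq: "\<And>x. x \<in> {0<..<1} \<Longrightarrow> dS * v2 x = v x - g x"
    and gI: "\<And>x. x \<in> {0<..<1} \<Longrightarrow> g x \<le> C1 * I x"
    and cI: "continuous_on {0..1} I" and Ipos: "\<forall>x\<in>{0..1}. I x \<ge> 0"
    and lip: "\<forall>x\<in>{0..1}. \<forall>y\<in>{0..1}. \<bar>v x - v y\<bar> \<le> Lv * \<bar>x - y\<bar>"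
    and Lv: "Lv > 0" and eta: "\<eta> > 0" and C1: "C1 > 0"
    and small: "integral {0..1} I < \<eta> * min (1/2) (\<eta> / (2 * Lv)) / (8 * C1)"
  shows "\<forall>x\<in>{0..1}. v x \<le> \<eta>"
proof -
  note cv = neumann_cont[OF nv]
  define h where "h = min (1/2) (\<eta> / (2 * Lv))"
  have h: "h > 0" "h \<le> 1/2" "Lv * h \<le> \<eta> / 2" using Lv eta
    by (auto simp: h_def min_def field_simps)
  define \<epsilon> where "\<epsilon> = integral {0..1} I"
  have eps: "C1 * \<epsilon> < \<eta> * h / 8" using small C1
    by (simp add: \<epsilon>_def h_def less_divide_eq algebra_simps)
  define P where "P t = integral {0..t} I" for t
  have cP: "continuous_on {0..1} P" unfolding P_def by (rule int_cont[OF cI])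
  have dP: "(P has_real_derivative I x) (at x)" if "x \<in> {0<..<1}" for x
    unfolding P_def using int_deriv[OF cI that] .
  have Pb: "0 \<le> P s" "P s \<le> \<epsilon>" if "s \<in> {0..1}" for s
    using int_mono[OF cI Ipos, of s s] int_mono[OF cI Ipos, of s 1] that
    unfolding P_def \<epsilon>_def by auto
  obtain x0 where x0: "x0 \<in> {0..1}" "\<forall>y\<in>{0..1}. v y \<le> v x0"
    using continuous_attains_sup[OF compact_Icc _ cv(1)] by auto
  have v1x0: "v1 x0 = 0"
  proof -
    consider "x0 = 0" | "x0 = 1" | "x0 \<in> {0<..<1}" using x0(1) by fastforce
    then show ?thesis
    proof cases
      case 3
      show ?thesis
      proof (rule DERIV_local_max[OF cv(3)[OF 3]])
        show "0 < min x0 (1 - x0)" using 3 by auto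
        show "\<forall>y. \<bar>x0 - y\<bar> < min x0 (1 - x0) \<longrightarrow> v y \<le> v x0"
          using x0(2) by (auto simp: abs_if split: if_splits)
      qed
    qed (use cv(5,6) in auto)
  qed
  have "v x0 \<le> \<eta>"
  proof (rule ccontr)
    assume "\<not> v x0 \<le> \<eta>"
    then have M: "v x0 > \<eta>" by simp
    define m where "m = \<eta> / 2"
    define K where "K = C1 * \<epsilon>"
    have vlow: "v y \<ge> m" if "y \<in> {0..1}" "\<bar>y - x0\<bar> \<le> h" for y
    proof -
      have "\<bar>v y - v x0\<bar> \<le> Lv * \<bar>y - x0\<bar>" using lip that x0(1) by blast
      also have "\<dots> \<le> Lv * h" using that Lv by (intro mult_left_mono) auto
      finally show ?thesis using h M by (simp add: m_def abs_le_iff)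
    qed
    have v2low: "dS * v2 y \<ge> m - C1 * I y" if "y \<in> {0<..<1}" "\<bar>y - x0\<bar> \<le> h" for y
      using eq[OF that(1)] gI[OF that(1)] vlow[of y] that by auto
    have key: "h * m / 2 \<le> K"
    proof (cases "x0 \<le> 1/2")
      case True
      define b where "b = x0 + h"
      have b: "x0 < b" "b \<le> 1" using True h by (auto simp: b_def)
      have v1low: "v1 t \<ge> ((t - x0) * m - K) / dS" if t: "x0 < t" "t \<le> b" for t
      proof -
        define chf where "chf s = v1 s - ((s - x0) * m - C1 * (P s - P x0)) / dS" for s
        have sub: "{x0..t} \<subseteq> {0..1}" using x0(1) t b by auto
        have cc: "continuous_on {x0..t} chf" unfolding chf_def
          using continuous_on_subset[OF cv(2) sub] continuous_on_subset[OF cP sub] dS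
          by (intro continuous_on_diff continuous_on_add continuous_on_divide continuous_on_mult continuous_on_const continuous_on_id; use dS in auto)
        have "chf x0 \<le> chf t"
        proof (rule mono_deriv[OF _ cc, where f'="\<lambda>s. v2 s - (m - C1 * I s) / dS"])
          show "x0 \<le> t" using t by simp
          fix s assume s: "x0 < s" "s < t"
          then have s01: "s \<in> {0<..<1}" using x0(1) t b by auto
          show "(chf has_real_derivative v2 s - (m - C1 * I s) / dS) (at s)" unfolding chf_def
            by (rule dchi1[OF cv(4)[OF s01] dP[OF s01]])
          have "\<bar>s - x0\<bar> \<le> h" using s t b by (auto simp: b_def)
          then have "dS * v2 s \<ge> m - C1 * I s" using v2low s01 by auto
          then have "v2 s \<ge> (m - C1 * I s) / dS" using dS by (simp add: divide_le_eq mult.commute)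
          then show "0 \<le> v2 s - (m - C1 * I s) / dS" by simp
        qed
        then have "0 \<le> v1 t - ((t - x0) * m - C1 * (P t - P x0)) / dS"
          using v1x0 by (simp add: chf_def)
        moreover have "C1 * (P t - P x0) \<le> K"
        proof -
          have "P t - P x0 \<le> \<epsilon>" using Pb[of t] Pb[of x0] x0(1) t b by auto
          then show ?thesis unfolding K_def using C1 by (intro mult_left_mono) auto
        qed
        ultimately show ?thesis using dS by (smt (verit) divide_right_mono)
      qed
      define psf where "psf s = v s - ((s - x0)^2 * m / 2 - (s - x0) * K) / dS" for s
      have sub: "{x0..b} \<subseteq> {0..1}" using x0(1) b by auto
      have cc: "continuous_on {x0..b} psf" unfolding psf_def
        using continuous_on_subset[OF cv(1) sub] dS by (intro continuous_on_diff continuous_on_add continuous_on_minus continuous_on_divide continuous_on_mult continuous_on_power continuous_on_const continuous_on_id; use dS in auto)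
      have "psf x0 \<le> psf b"
      proof (rule mono_deriv[OF _ cc, where f'="\<lambda>s. v1 s - ((s - x0) * m - K) / dS"])
        show "x0 \<le> b" using b by simp
        fix s assume s: "x0 < s" "s < b"
        then have s01: "s \<in> {0<..<1}" using x0(1) b by auto
        show "(psf has_real_derivative v1 s - ((s - x0) * m - K) / dS) (at s)" unfolding psf_def
          by (rule dpsi1[OF cv(3)[OF s01]])
        show "0 \<le> v1 s - ((s - x0) * m - K) / dS" using v1low[of s] s by simp
      qed
      moreover have "v b \<le> v x0" using x0(2) b x0(1) by auto
      ultimately have "(h^2 * m / 2 - h * K) / dS \<le> 0" by (simp add: psf_def b_def)
      then have "h * (h * m / 2 - K) \<le> 0" using dS by (simp add: divide_le_0_iff power2_eq_square algebra_simps)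
      then show ?thesis using h by (simp add: mult_le_0_iff)
    next
      case False
      define a where "a = x0 - h"
      have a: "a < x0" "0 \<le> a" using False h by (auto simp: a_def)
      have v1up: "v1 t \<le> - ((x0 - t) * m - K) / dS" if t: "a \<le> t" "t < x0" for t
      proof -
        define chf where "chf s = v1 s + ((x0 - s) * m - C1 * (P x0 - P s)) / dS" for s
        have sub: "{t..x0} \<subseteq> {0..1}" using x0(1) t a by auto
        have cc: "continuous_on {t..x0} chf" unfolding chf_def
          using continuous_on_subset[OF cv(2) sub] continuous_on_subset[OF cP sub] dS
          by (intro continuous_on_diff continuous_on_add continuous_on_divide continuous_on_mult continuous_on_const continuous_on_id; use dS in auto)
        have "chf t \<le> chf x0"
        proof (rule mono_deriv[OF _ cc, where f'="\<lambda>s. v2 s - (m - C1 * I s) / dS"])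
          show "t \<le> x0" using t by simp
          fix s assume s: "t < s" "s < x0"
          then have s01: "s \<in> {0<..<1}" using x0(1) t a by auto
          show "(chf has_real_derivative v2 s - (m - C1 * I s) / dS) (at s)" unfolding chf_def
            by (rule dchi2[OF cv(4)[OF s01] dP[OF s01]])
          have "\<bar>s - x0\<bar> \<le> h" using s t a by (auto simp: a_def)
          then have "dS * v2 s \<ge> m - C1 * I s" using v2low s01 by auto
          then have "v2 s \<ge> (m - C1 * I s) / dS" using dS by (simp add: divide_le_eq mult.commute)
          then show "0 \<le> v2 s - (m - C1 * I s) / dS" by simp
        qed
        then have "v1 t + ((x0 - t) * m - C1 * (P x0 - P t)) / dS \<le> 0"
          using v1x0 by (simp add: chf_def)
        moreover have "C1 * (P x0 - P t) \<le> K"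
        proof -
          have "P x0 - P t \<le> \<epsilon>" using Pb[of t] Pb[of x0] x0(1) t a by auto
          then show ?thesis unfolding K_def using C1 by (intro mult_left_mono) auto
        qed
        ultimately show ?thesis using dS by (smt (verit) divide_right_mono minus_divide_left)
      qed
      define psf where "psf s = - v s + ((x0 - s)^2 * m / 2 - (x0 - s) * K) / dS" for s
      have sub: "{a..x0} \<subseteq> {0..1}" using x0(1) a by auto
      have cc: "continuous_on {a..x0} psf" unfolding psf_def
        using continuous_on_subset[OF cv(1) sub] dS by (intro continuous_on_diff continuous_on_add continuous_on_minus continuous_on_divide continuous_on_mult continuous_on_power continuous_on_const continuous_on_id; use dS in auto)
      have "psf a \<le> psf x0"
      proof (rule mono_deriv[OF _ cc, where f'="\<lambda>s. - v1 s + (K - (x0 - s) * m) / dS"])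
        show "a \<le> x0" using a by simp
        fix s assume s: "a < s" "s < x0"
        then have s01: "s \<in> {0<..<1}" using x0(1) a by auto
        show "(psf has_real_derivative - v1 s + (K - (x0 - s) * m) / dS) (at s)" unfolding psf_def
          by (rule dpsi2[OF cv(3)[OF s01]])
        have "- ((x0 - s) * m - K) / dS = (K - (x0 - s) * m) / dS" by (simp add: minus_divide_left)
        then show "0 \<le> - v1 s + (K - (x0 - s) * m) / dS" using v1up[of s] s by simp
      qed
      moreover have "v a \<le> v x0" using x0(2) a x0(1) by auto
      ultimately have "(h^2 * m / 2 - h * K) / dS \<le> 0" by (simp add: psf_def a_def)
      then have "h * (h * m / 2 - K) \<le> 0" using dS by (simp add: divide_le_0_iff power2_eq_square algebra_simps)
      then show ?thesis using h by (simp add: mult_le_0_iff)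
    qed
    have "h * m / 2 = \<eta> * h / 4" by (simp add: m_def)
    moreover have "\<eta> * h > 0" using eta h(1) by simp
    ultimately show False using key eps unfolding K_def by linarith
  qed
  then show ?thesis using x0 by auto
qed

context sirs begin

lemma key_lower:
  assumes sc: "pos_sol_scalar dS \<Lambda> St" and xs: "xs \<in> {0..1}" and hx: "\<beta> xs * St xs > \<gamma> xs + \<mu> xs"
  shows "\<exists>\<delta>>0. \<exists>d0>0. \<forall>dI S I. 0 < dI \<and> dI < d0 \<and> pos_sol_E dS dI \<Lambda> \<beta> \<gamma> \<mu> S I \<longrightarrow> integral {0..1} I \<ge> \<delta>"
proof -
  obtain St1 St2 where nT: "neumann_C2 St St1 St2" and eqT: "\<And>x. x \<in> {0<..<1} \<Longrightarrow> - dS * St2 x = \<Lambda> x - St x"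
    using sc unfolding pos_sol_scalar_def by blast
  note cT = neumann_cont[OF nT]
  note cp = consts_pos
  obtain xm where xm: "xm \<in> {0..1}" "\<forall>y\<in>{0..1}. \<bar>St1 y\<bar> \<le> \<bar>St1 xm\<bar>"
    using continuous_attains_sup[OF compact_Icc _ continuous_on_rabs[OF cT(2)]] by auto
  define Dt where "Dt = \<bar>St1 xm\<bar>"
  have Dt: "\<forall>y\<in>{0..1}. \<bar>St1 y\<bar> \<le> Dt" "Dt \<ge> 0" using xm by (auto simp: Dt_def)
  have lipT: "\<forall>x\<in>{0..1}. \<forall>y\<in>{0..1}. \<bar>St x - St y\<bar> \<le> Dt * \<bar>x - y\<bar>"
    using lipschitz01[OF cT(7) Dt(1)] by blast
  define hf where "hf x = \<beta> x * St x - \<gamma> x - \<mu> x" for x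
  have chf: "continuous_on {0..1} hf" unfolding hf_def
    by (intro continuous_on_diff continuous_on_mult cb cT(1) cg cm)
  have hxs: "hf xs > 0" using hx by (simp add: hf_def)
  define c where "c = hf xs / 4"
  have c: "c > 0" using hxs by (simp add: c_def)
  obtain \<rho> where \<rho>: "\<rho> > 0" "\<forall>y\<in>{0..1}. dist y xs < \<rho> \<longrightarrow> dist (hf y) (hf xs) < hf xs / 2"
    using chf xs hxs unfolding continuous_on_iff by (metis half_gt_zero)
  define x1 where "x1 = max 0 (xs - \<rho>/2)"
  define x2 where "x2 = min 1 (xs + \<rho>/2)"
  have x12: "0 \<le> x1" "x1 < x2" "x2 \<le> 1" using xs \<rho>(1) by (auto simp: x1_def x2_def)
  have hJ: "hf y > 2 * c" if "x1 \<le> y" "y \<le> x2" for y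
  proof -
    have "y \<in> {0..1}" "dist y xs < \<rho>" using that x12 \<rho>(1) by (auto simp: x1_def x2_def dist_real_def)
    then have "dist (hf y) (hf xs) < hf xs / 2" using \<rho>(2) by blast
    then have "\<bar>hf y - hf xs\<bar> < hf xs / 2" by (simp add: dist_real_def)
    then show ?thesis unfolding c_def by linarith
  qed
  define \<eta> where "\<eta> = c / Bb"
  have eta: "\<eta> > 0" "Bb * \<eta> = c" using c cp by (auto simp: \<eta>_def)
  define Lv where "Lv = Dt + Dn + 1"
  have Dn0: "Dn \<ge> 0" using cp dS mmu by (simp add: Dn_def)
  have Lv: "Lv > 0" using Dt Dn0 by (simp add: Lv_def)
  define C1 where "C1 = Bb * Kup + 1"
  have C1: "C1 > 0" using cp by (simp add: C1_def add_pos_nonneg)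
  define \<delta> where "\<delta> = \<eta> * min (1/2) (\<eta> / (2 * Lv)) / (8 * C1)"
  have \<delta>: "\<delta> > 0" using eta Lv C1 by (simp add: \<delta>_def)
  define d0 where "d0 = c / (pi / (x2 - x1))^2"
  have d0: "d0 > 0" using c x12 by (simp add: d0_def)
  show ?thesis
  proof (rule exI[of _ \<delta>], rule conjI[OF \<delta>], rule exI[of _ d0], rule conjI[OF d0], intro allI impI)
    fix dI S I assume A: "0 < dI \<and> dI < d0 \<and> pos_sol_E dS dI \<Lambda> \<beta> \<gamma> \<mu> S I"
    then have dI: "0 < dI" "dI < d0" and sol: "pos_sol_E dS dI \<Lambda> \<beta> \<gamma> \<mu> S I" by auto
    obtain S1 S2 I1 I2 where nS: "neumann_C2 S S1 S2" and nI: "neumann_C2 I I1 I2"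
      and eqS: "\<And>x. x \<in> {0<..<1} \<Longrightarrow> - dS * S2 x = \<Lambda> x - S x - \<beta> x * S x * I x + \<gamma> x * I x"
      and eqI: "\<And>x. x \<in> {0<..<1} \<Longrightarrow> - dI * I2 x = \<beta> x * S x * I x - (\<gamma> x + \<mu> x) * I x"
      and Sp: "\<And>x. x \<in> {0..1} \<Longrightarrow> S x > 0" and Ip: "\<And>x. x \<in> {0..1} \<Longrightarrow> I x > 0"
      using sol_parts[OF sol] by metis
    note Sb = S_bounds[OF sol] and ib = int_bound[OF sol dI(1)] and lipS = S_lip[OF sol dI(1)]
    show "integral {0..1} I \<ge> \<delta>"
    proof (rule ccontr)
      assume "\<not> integral {0..1} I \<ge> \<delta>"
      then have small: "integral {0..1} I < \<delta>" by simp
      define g where "g x = I x * (\<beta> x * S x - \<gamma> x)" for x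
      have close: "\<forall>x\<in>{0..1}. St x - S x \<le> \<eta>"
      proof (rule closeness_core[OF neumann_diff[OF nT nS] dS _ _ ib(3) _ _ Lv eta(1) C1])
        show "dS * (St2 x - S2 x) = St x - S x - g x" if "x \<in> {0<..<1}" for x
          using eqT[OF that] eqS[OF that] by (simp add: g_def algebra_simps)
        show "g x \<le> C1 * I x" if x: "x \<in> {0<..<1}" for x
        proof -
          have x01: "x \<in> {0..1}" using x by auto
          note b = bnd[OF x01] and p = pos[OF x01]
          have "\<beta> x * S x \<le> Bb * Kup" using b p Sb x01 Sp[OF x01] by (intro mult_mono) auto
          then have "\<beta> x * S x - \<gamma> x \<le> C1" using p by (simp add: C1_def)
          then show ?thesis using Ip[OF x01] by (simp add: g_def mult.commute mult_left_mono)
        qed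
        show "\<forall>x\<in>{0..1}. I x \<ge> 0" using Ip by (auto intro: less_imp_le)
        show "\<forall>x\<in>{0..1}. \<forall>y\<in>{0..1}. \<bar>(St x - S x) - (St y - S y)\<bar> \<le> Lv * \<bar>x - y\<bar>"
        proof (intro ballI)
          fix x y :: real assume xy: "x \<in> {0..1}" "y \<in> {0..1}"
          have "\<bar>(St x - S x) - (St y - S y)\<bar> \<le> \<bar>St x - St y\<bar> + \<bar>S x - S y\<bar>" by linarith
          also have "\<dots> \<le> Dt * \<bar>x - y\<bar> + Dn * \<bar>x - y\<bar>" using lipT lipS xy by (meson add_mono)
          also have "\<dots> \<le> Lv * \<bar>x - y\<bar>" by (simp add: Lv_def algebra_simps)
          finally show "\<bar>(St x - S x) - (St y - S y)\<bar> \<le> Lv * \<bar>x - y\<bar>" .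
        qed
        show "integral {0..1} I < \<eta> * min (1 / 2) (\<eta> / (2 * Lv)) / (8 * C1)" using small by (simp add: \<delta>_def)
      qed
      show False
      proof (rule sturm[OF nI _ x12 dI(1), where a="\<lambda>x. \<beta> x * S x - \<gamma> x - \<mu> x"])
        show "\<forall>x\<in>{0..1}. 0 < I x" using Ip by auto
        show "\<forall>x\<in>{x1<..<x2}. dI * I2 x + (\<beta> x * S x - \<gamma> x - \<mu> x) * I x = 0"
        proof
          fix x assume "x \<in> {x1<..<x2}"
          then have "x \<in> {0<..<1}" using x12 by auto
          from eqI[OF this] show "dI * I2 x + (\<beta> x * S x - \<gamma> x - \<mu> x) * I x = 0" by (simp add: algebra_simps)
        qed
        show "\<forall>x\<in>{x1<..<x2}. \<beta> x * S x - \<gamma> x - \<mu> x > dI * (pi / (x2 - x1))^2"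
        proof
          fix x assume x: "x \<in> {x1<..<x2}"
          then have x01: "x \<in> {0..1}" using x12 by auto
          note b = bnd[OF x01] and p = pos[OF x01]
          have "\<beta> x * (St x - S x) \<le> \<beta> x * \<eta>" using close x01 p by (intro mult_left_mono) auto
          also have "\<dots> \<le> Bb * \<eta>" using b eta by (intro mult_right_mono) auto
          finally have "\<beta> x * (St x - S x) \<le> c" using eta by simp
          moreover have "hf x > 2 * c" using hJ x by auto
          ultimately have "\<beta> x * S x - \<gamma> x - \<mu> x > c" by (simp add: hf_def algebra_simps)
          moreover have "dI * (pi / (x2 - x1))^2 < c"
          proof -
            have pos2: "(pi / (x2 - x1))^2 > 0" using x12 by simp
            have "dI * (pi / (x2 - x1))^2 < d0 * (pi / (x2 - x1))^2"
              using dI pos2 by (intro mult_strict_right_mono) auto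
            also have "\<dots> = c" using pos2 by (simp add: d0_def)
            finally show ?thesis .
          qed
          ultimately show "\<beta> x * S x - \<gamma> x - \<mu> x > dI * (pi / (x2 - x1))^2" by linarith
        qed
      qed
    qed
  qed
qed

end

theorem theorem3p2:
  fixes \<Lambda> \<beta> \<gamma> \<mu> St :: "real \<Rightarrow> real" and dS :: real
  assumes "holder_on01 \<Lambda>" "holder_on01 \<beta>" "holder_on01 \<gamma>" "holder_on01 \<mu>"
    and "\<forall>x\<in>{0..1}. \<Lambda> x > 0 \<and> \<beta> x > 0 \<and> \<gamma> x > 0 \<and> \<mu> x > 0"
    and "dS > 0"
    and "pos_sol_scalar dS \<Lambda> St"
    and "{x\<in>{0..1}. \<beta> x * St x > \<gamma> x + \<mu> x} \<noteq> {}"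
  shows "\<forall>(dI :: nat \<Rightarrow> real) (S :: nat \<Rightarrow> real \<Rightarrow> real) (I :: nat \<Rightarrow> real \<Rightarrow> real).
           (\<forall>n. dI n > 0) \<and> dI \<longlonglongrightarrow> 0 \<and>
           (\<forall>n. pos_sol_E dS (dI n) \<Lambda> \<beta> \<gamma> \<mu> (S n) (I n)) \<longrightarrow>
           (\<exists>r S0 I0. strict_mono r \<and> continuous_on {0..1} S0 \<and>
              (\<forall>x\<in>{0..1}. S0 x > 0) \<and>
              uniform_limit {0..1} (\<lambda>n. S (r n)) S0 sequentially \<and>
              I0 > 0 \<and> (\<lambda>n. integral {0..1} (I (r n))) \<longlonglongrightarrow> I0)"
proof (intro allI impI)
  have cL: "continuous_on {0..1} \<Lambda>" and cb: "continuous_on {0..1} \<beta>"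
    and cg: "continuous_on {0..1} \<gamma>" and cm: "continuous_on {0..1} \<mu>"
    using holder_cont assms(1-4) by auto
  have pos: "\<And>x. x \<in> {0..1} \<Longrightarrow> \<Lambda> x > 0 \<and> \<beta> x > 0 \<and> \<gamma> x > 0 \<and> \<mu> x > 0" using assms(5) by auto
  have ne: "{0..1::real} \<noteq> {}" by simp
  obtain x1 where x1: "x1 \<in> {0..1}" "\<forall>y\<in>{0..1}. \<Lambda> y \<le> \<Lambda> x1"
    using continuous_attains_sup[OF compact_Icc ne cL] by blast
  obtain x2 where x2: "x2 \<in> {0..1}" "\<forall>y\<in>{0..1}. \<beta> y \<le> \<beta> x2"
    using continuous_attains_sup[OF compact_Icc ne cb] by blast
  obtain x3 where x3: "x3 \<in> {0..1}" "\<forall>y\<in>{0..1}. \<gamma> y \<le> \<gamma> x3"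
    using continuous_attains_sup[OF compact_Icc ne cg] by blast
  obtain x4 where x4: "x4 \<in> {0..1}" "\<forall>y\<in>{0..1}. \<mu> x4 \<le> \<mu> y"
    using continuous_attains_inf[OF compact_Icc ne cm] by blast
  define q where "q x = min (\<Lambda> x) (\<gamma> x / \<beta> x)" for x
  define Q where "Q x = max (\<Lambda> x) (\<gamma> x / \<beta> x)" for x
  have cgb: "continuous_on {0..1} (\<lambda>x. \<gamma> x / \<beta> x)"
    using pos by (intro continuous_on_divide cg cb) (metis atLeastAtMost_iff less_irrefl)
  have cq: "continuous_on {0..1} q" unfolding q_def by (intro continuous_on_min cL cgb)
  have cQ: "continuous_on {0..1} Q" unfolding Q_def by (intro continuous_on_max cL cgb)
  obtain x5 where x5: "x5 \<in> {0..1}" "\<forall>y\<in>{0..1}. q x5 \<le> q y"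
    using continuous_attains_inf[OF compact_Icc ne cq] by blast
  obtain x6 where x6: "x6 \<in> {0..1}" "\<forall>y\<in>{0..1}. Q y \<le> Q x6"
    using continuous_attains_sup[OF compact_Icc ne cQ] by blast
  have q5: "q x5 > 0" using pos[OF x5(1)] by (simp add: q_def)
  interpret sirs \<Lambda> \<beta> \<gamma> \<mu> dS "\<Lambda> x1" "\<beta> x2" "\<gamma> x3" "\<mu> x4" "q x5" "Q x6"
  proof
    show "continuous_on {0..1} \<Lambda>" "continuous_on {0..1} \<beta>" "continuous_on {0..1} \<gamma>" "continuous_on {0..1} \<mu>"
      by (fact cL cb cg cm)+
    show "\<And>x. x \<in> {0..1} \<Longrightarrow> \<Lambda> x > 0 \<and> \<beta> x > 0 \<and> \<gamma> x > 0 \<and> \<mu> x > 0" by (fact pos)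
    show "dS > 0" by (fact assms(6))
    show "\<mu> x4 > 0" using pos[OF x4(1)] by auto
    show "q x5 > 0" by (fact q5)
    fix x :: real assume x: "x \<in> {0..1}"
    have bx: "\<beta> x > 0" using pos[OF x] by auto
    have "q x5 \<le> q x" using x5 x by auto
    then have k1: "q x5 \<le> \<Lambda> x" "q x5 \<le> \<gamma> x / \<beta> x" by (auto simp: q_def)
    have "Q x \<le> Q x6" using x6 x by auto
    then have k2: "\<Lambda> x \<le> Q x6" "\<gamma> x / \<beta> x \<le> Q x6" by (auto simp: Q_def)
    have "q x5 * \<beta> x \<le> \<gamma> x" using k1(2) bx by (simp add: le_divide_eq)
    moreover have "\<gamma> x \<le> Q x6 * \<beta> x" using k2(2) bx by (simp add: divide_le_eq)
    ultimately show "\<Lambda> x \<le> \<Lambda> x1 \<and> \<beta> x \<le> \<beta> x2 \<and> \<gamma> x \<le> \<gamma> x3 \<and> \<mu> x4 \<le> \<mu> x \<and>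
         q x5 \<le> \<Lambda> x \<and> q x5 * \<beta> x \<le> \<gamma> x \<and> \<Lambda> x \<le> Q x6 \<and> \<gamma> x \<le> Q x6 * \<beta> x"
      using x1 x2 x3 x4 x k1 k2 by auto
  qed
  obtain xs where xs: "xs \<in> {0..1}" "\<beta> xs * St xs > \<gamma> xs + \<mu> xs" using assms(8) by auto
  obtain \<delta> d0 where \<delta>: "\<delta> > 0" "d0 > 0"
    and low: "\<And>dI S I. 0 < dI \<Longrightarrow> dI < d0 \<Longrightarrow> pos_sol_E dS dI \<Lambda> \<beta> \<gamma> \<mu> S I \<Longrightarrow> integral {0..1} I \<ge> \<delta>"
    using key_lower[OF assms(7) xs] by blast
  fix dI :: "nat \<Rightarrow> real" and S I :: "nat \<Rightarrow> real \<Rightarrow> real"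
  assume H: "(\<forall>n. dI n > 0) \<and> dI \<longlonglongrightarrow> 0 \<and> (\<forall>n. pos_sol_E dS (dI n) \<Lambda> \<beta> \<gamma> \<mu> (S n) (I n))"
  then have dIp: "\<And>n. dI n > 0" and dIl: "dI \<longlonglongrightarrow> 0"
    and sol: "\<And>n. pos_sol_E dS (dI n) \<Lambda> \<beta> \<gamma> \<mu> (S n) (I n)" by auto
  have Sb: "\<And>n x. x \<in> {0..1} \<Longrightarrow> q x5 \<le> S n x \<and> S n x \<le> Q x6" using S_bounds[OF sol] by blast
  have lip: "\<And>n x y. x \<in> {0..1} \<Longrightarrow> y \<in> {0..1} \<Longrightarrow> \<bar>S n x - S n y\<bar> \<le> Dn * \<bar>x - y\<bar>"
    using S_lip[OF sol dIp] by blast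
  have Dn0: "Dn \<ge> 0" using consts_pos assms(6) pos[OF x4(1)] by (simp add: Dn_def)
  obtain g k where cg0: "continuous_on {0..1} g" and k: "strict_mono (k :: nat \<Rightarrow> nat)"
    and uk: "\<And>e. 0 < e \<Longrightarrow> \<exists>N. \<forall>n x. n \<ge> N \<and> x \<in> {0..1} \<longrightarrow> norm (S (k n) x - g x) < e"
  proof (rule Arzela_Ascoli[of "{0..1}" S "Q x6"])
    show "compact {0..1::real}" by simp
    show "norm (S n x) \<le> Q x6" if "x \<in> {0..1}" for n x using Sb[OF that, of n] q5 by auto
    fix x e :: real assume x: "x \<in> {0..1}" and e: "0 < e"
    show "\<exists>d>0. \<forall>n y. y \<in> {0..1} \<and> norm (x - y) < d \<longrightarrow> norm (S n x - S n y) < e"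
    proof (intro exI[of _ "e / (Dn + 1)"] conjI allI impI)
      show "e / (Dn + 1) > 0" using e Dn0 by simp
      fix n y assume y: "y \<in> {0..1} \<and> norm (x - y) < e / (Dn + 1)"
      have "\<bar>S n x - S n y\<bar> \<le> Dn * \<bar>x - y\<bar>" using lip x y by auto
      also have "\<dots> \<le> (Dn + 1) * \<bar>x - y\<bar>" by (simp add: algebra_simps)
      also have "\<dots> < (Dn + 1) * (e / (Dn + 1))" using y Dn0 by (intro mult_strict_left_mono) auto
      also have "\<dots> = e" using Dn0 by simp
      finally show "norm (S n x - S n y) < e" by simp
    qed
  qed blast
  have ib: "\<And>n. integral {0..1} (I n) \<in> {0..\<Lambda> x1 / \<mu> x4}"
    using int_bound[OF sol dIp] by auto
  obtain l r2 where l: "l \<in> {0..\<Lambda> x1 / \<mu> x4}" and r2: "strict_mono r2"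
    and lim: "((\<lambda>n. integral {0..1} (I (k n))) \<circ> r2) \<longlonglongrightarrow> l"
  proof -
    have sc: "seq_compact {0..\<Lambda> x1 / \<mu> x4}" by (rule compact_imp_seq_compact[OF compact_Icc])
    have "\<exists>l\<in>{0..\<Lambda> x1 / \<mu> x4}. \<exists>r. strict_mono r \<and> ((\<lambda>n. integral {0..1} (I (k n))) \<circ> r) \<longlonglongrightarrow> l"
      using sc[unfolded seq_compact_def, THEN spec, of "\<lambda>n. integral {0..1} (I (k n))"] ib by blast
    then show ?thesis using that by blast
  qed
  define r where "r n = k (r2 n)" for n
  have r: "strict_mono r" using k r2 unfolding r_def strict_mono_def by simp
  show "\<exists>r S0 I0. strict_mono r \<and> continuous_on {0..1} S0 \<and>
              (\<forall>x\<in>{0..1}. S0 x > 0) \<and>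
              uniform_limit {0..1} (\<lambda>n. S (r n)) S0 sequentially \<and>
              I0 > 0 \<and> (\<lambda>n. integral {0..1} (I (r n))) \<longlonglongrightarrow> I0"
  proof (intro exI[of _ r] exI[of _ g] exI[of _ l] conjI r cg0)
    show "\<forall>x\<in>{0..1}. g x > 0"
    proof
      fix x :: real assume x: "x \<in> {0..1}"
      show "g x > 0"
      proof (rule ccontr)
        assume "\<not> g x > 0"
        then obtain N where "\<forall>n x'. n \<ge> N \<and> x' \<in> {0..1} \<longrightarrow> norm (S (k n) x' - g x') < q x5"
          using uk[OF q5] by blast
        then have "\<bar>S (k N) x - g x\<bar> < q x5" using x by auto
        moreover have "q x5 \<le> S (k N) x" using Sb[OF x] by blast
        ultimately show False using \<open>\<not> g x > 0\<close> by linarith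
      qed
    qed
    show "uniform_limit {0..1} (\<lambda>n. S (r n)) g sequentially"
      unfolding uniform_limit_sequentially_iff
    proof (intro allI impI)
      fix e :: real assume e: "e > 0"
      obtain N where N: "\<forall>n x. n \<ge> N \<and> x \<in> {0..1} \<longrightarrow> norm (S (k n) x - g x) < e" using uk[OF e] by blast
      show "\<exists>N. \<forall>n\<ge>N. \<forall>x\<in>{0..1}. dist (S (r n) x) (g x) < e"
      proof (intro exI[of _ N] allI impI ballI)
        fix n and x :: real assume n: "N \<le> n" and x: "x \<in> {0..1}"
        have "r2 n \<ge> n" using seq_suble[OF r2] .
        then show "dist (S (r n) x) (g x) < e" using N n x by (auto simp: r_def dist_norm)
      qed
    qed
    show "(\<lambda>n. integral {0..1} (I (r n))) \<longlonglongrightarrow> l" using lim by (simp add: r_def o_def)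
    have ev: "\<forall>\<^sub>F n in sequentially. dI n < d0" using order_tendstoD(2)[OF dIl \<delta>(2)] .
    then obtain N where N: "\<And>n. n \<ge> N \<Longrightarrow> dI n < d0" unfolding eventually_sequentially by blast
    have "\<forall>\<^sub>F n in sequentially. \<delta> \<le> integral {0..1} (I (r n))"
      unfolding eventually_sequentially
    proof (intro exI[of _ N] allI impI)
      fix n assume n: "N \<le> n"
      have "r n \<ge> n" using seq_suble[OF r] .
      then have "dI (r n) < d0" using N n by auto
      then show "\<delta> \<le> integral {0..1} (I (r n))" using low[OF dIp _ sol] by blast
    qed
    moreover have L: "(\<lambda>n. integral {0..1} (I (r n))) \<longlonglongrightarrow> l" using lim by (simp add: r_def o_def)
    ultimately have "\<delta> \<le> l" using tendsto_lowerbound[OF L _ trivial_limit_sequentially] by blast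
    then show "l > 0" using \<delta>(1) by linarith
  qed
qed

end
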